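(* For $U\in\mathcal{U}_N$ and $j\in[n]$, $\mathrm{Inf}_j[U]=1-\frac{1}{2^{n+1}}\mathrm{Tr}\big((\mathrm{Tr}_jU^\dagger)(\mathrm{Tr}_jU)\big)$. More generally, for $S\subseteq[n]$, $\mathrm{Inf}_S[U]=1-\frac{1}{2^{n+|S|}}\mathrm{Tr}\big((\mathrm{Tr}_SU^\dagger)(\mathrm{Tr}_SU)\big)$.
   Context: $N=2^n$, $\mathcal{U}_N$ is the set of $N\times N$ unitaries. For $x\in\mathbb{Z}_4^n$, $\sigma_x=\sigma_{x_1}\otimes\cdots\otimes\sigma_{x_n}$ with $\sigma_0=I,\sigma_1=X,\sigma_2=Y,\sigma_3=Z$, and $\mathrm{supp}(x)=\{i:x_i\ne0\}$. Writing $U=\sum_x\widehat{U}(x)\sigma_x$, $\mathrm{Inf}_S[U]=\sum_{x:\,\mathrm{supp}(x)\cap S\ne\emptyset}|\widehat{U}(x)|^2$ and $\mathrm{Inf}_j[U]=\mathrm{Inf}_{\{j\}}[U]$. The partial trace over $S$ is $\mathrm{Tr}_S(U)=\sum_{k\in\{0,1\}^S}(I_{\overline S}\otimes\langle k|)\,U\,(I_{\overline S}\otimes|k\rangle)$, an operator on the qubits in $\overline{S}=[n]\setminus S$; $\mathrm{Tr}_j=\mathrm{Tr}_{\{j\}}$. *)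

theory Defs
  imports Complex_Main "Jordan_Normal_Form.Matrix"
begin

definition mtrace :: "complex mat \<Rightarrow> complex" where
  "mtrace A = (\<Sum>i<dim_row A. A $$ (i, i))"

definition adj :: "complex mat \<Rightarrow> complex mat" where
  "adj A = mat (dim_col A) (dim_row A) (\<lambda>(i, j). cnj (A $$ (j, i)))"

definition unitary_mat :: "nat \<Rightarrow> complex mat \<Rightarrow> bool" where
  "unitary_mat d U \<longleftrightarrow> U \<in> carrier_mat d d \<and> adj U * U = 1\<^sub>m d \<and> U * adj U = 1\<^sub>m d"

text \<open>Qubits are numbered 1..n.  A basis index i < 2^n of the n-qubit space encodes the
bit string (b_1,...,b_n) with qubit 1 the most significant bit, matching the tensor
order sigma_{x_1} (x) ... (x) sigma_{x_n}.\<close>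

definition qbit :: "nat \<Rightarrow> nat \<Rightarrow> nat \<Rightarrow> nat" where
  "qbit n q i = i div 2 ^ (n - q) mod 2"

definition pauli1 :: "nat \<Rightarrow> complex mat" where
  "pauli1 a = (if a = 0 then mat_of_rows_list 2 [[1, 0], [0, 1]]
               else if a = 1 then mat_of_rows_list 2 [[0, 1], [1, 0]]
               else if a = 2 then mat_of_rows_list 2 [[0, -\<i>], [\<i>, 0]]
               else mat_of_rows_list 2 [[1, 0], [0, -1]])"

text \<open>Z_4^n as functions x with x q < 4 for q in [n] and x q = 0 outside [n].\<close>
definition Z4n :: "nat \<Rightarrow> (nat \<Rightarrow> nat) set" where
  "Z4n n = {x. (\<forall>q. x q < 4) \<and> (\<forall>q. q \<notin> {1..n} \<longrightarrow> x q = 0)}"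

definition supp :: "nat \<Rightarrow> (nat \<Rightarrow> nat) \<Rightarrow> nat set" where
  "supp n x = {q \<in> {1..n}. x q \<noteq> 0}"

definition pauli :: "nat \<Rightarrow> (nat \<Rightarrow> nat) \<Rightarrow> complex mat" where
  "pauli n x = mat (2 ^ n) (2 ^ n)
     (\<lambda>(i, j). \<Prod>q\<in>{1..n}. pauli1 (x q) $$ (qbit n q i, qbit n q j))"

text \<open>Pauli (Fourier) coefficients: the coefficients in U = sum_x hat U(x) sigma_x
(the matrix identity written entrywise, as matrices do not form a monoid under + in JNF).\<close>
definition pauli_coeff :: "nat \<Rightarrow> complex mat \<Rightarrow> (nat \<Rightarrow> nat) \<Rightarrow> complex" where
  "pauli_coeff n U = (THE c. (\<forall>x. x \<notin> Z4n n \<longrightarrow> c x = 0) \<and>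
     (\<forall>i<2 ^ n. \<forall>j<2 ^ n. U $$ (i, j) = (\<Sum>x\<in>Z4n n. c x * pauli n x $$ (i, j))))"

definition influence :: "nat \<Rightarrow> nat set \<Rightarrow> complex mat \<Rightarrow> real" where
  "influence n S U = (\<Sum>x\<in>{x \<in> Z4n n. supp n x \<inter> S \<noteq> {}}. (cmod (pauli_coeff n U x))\<^sup>2)"

text \<open>For a set Q of qubits with m = card Q elements, listed increasingly as
q_0 < ... < q_{m-1}, an index a < 2^m of the space of the qubits in Q assigns to q_j the
bit a div 2^(m-1-j) mod 2, where j = card {p in Q. p < q_j} is the position of q_j (again the first qubit most significant).\<close>
definition sub_bit :: "nat set \<Rightarrow> nat \<Rightarrow> nat \<Rightarrow> nat" where
  "sub_bit Q a q = (if q \<in> Q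
      then a div 2 ^ (card Q - Suc (card {p \<in> Q. p < q})) mod 2 else 0)"

text \<open>Full index of the basis state |a> (on the complement of S) tensor |k> (on S).\<close>
definition merge_idx :: "nat \<Rightarrow> nat set \<Rightarrow> nat \<Rightarrow> nat \<Rightarrow> nat" where
  "merge_idx n S a k = (\<Sum>q\<in>{1..n}.
      (if q \<in> S then sub_bit S k q else sub_bit ({1..n} - S) a q) * 2 ^ (n - q))"

text \<open>Tr_S(U) = sum_k (I (x) <k|) U (I (x) |k>), an operator on the qubits of [n] - S.\<close>
definition ptrace :: "nat \<Rightarrow> nat set \<Rightarrow> complex mat \<Rightarrow> complex mat" where
  "ptrace n S U = mat (2 ^ card ({1..n} - S)) (2 ^ card ({1..n} - S))
     (\<lambda>(a, b). \<Sum>k<2 ^ card S. U $$ (merge_idx n S a k, merge_idx n S b k))"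

end

theory Submission
  imports Defs
begin

definition ext_funs :: "nat set \<Rightarrow> (nat \<Rightarrow> nat set) \<Rightarrow> (nat \<Rightarrow> nat) set" where
  "ext_funs Q A = {f. (\<forall>q\<in>Q. f q \<in> A q) \<and> (\<forall>q. q \<notin> Q \<longrightarrow> f q = 0)}"

lemma ext_funs_empty: "ext_funs {} A = {\<lambda>_. 0}"
  by (auto simp: ext_funs_def)

lemma ext_funs_insert:
  assumes "q \<notin> Q"
  shows "ext_funs (insert q Q) A = (\<lambda>(a,f). f(q:=a)) ` (A q \<times> ext_funs Q A)"
proof
  show "ext_funs (insert q Q) A \<subseteq> (\<lambda>(a,f). f(q:=a)) ` (A q \<times> ext_funs Q A)"
  proof
    fix f assume f: "f \<in> ext_funs (insert q Q) A"
    have "(f q, f(q:=0)) \<in> A q \<times> ext_funs Q A" using f assms by (auto simp: ext_funs_def)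
    moreover have "f = (\<lambda>(a,f). f(q:=a)) (f q, f(q:=0))" by simp
    ultimately show "f \<in> (\<lambda>(a,f). f(q:=a)) ` (A q \<times> ext_funs Q A)" by blast
  qed
  show "(\<lambda>(a,f). f(q:=a)) ` (A q \<times> ext_funs Q A) \<subseteq> ext_funs (insert q Q) A"
    using assms by (auto simp: ext_funs_def)
qed

lemma ext_funs_inj:
  assumes "q \<notin> Q"
  shows "inj_on (\<lambda>(a,f). f(q:=a)) (A q \<times> ext_funs Q A)"
proof (rule inj_onI, clarify)
  fix a f b g assume f: "f \<in> ext_funs Q A" and g: "g \<in> ext_funs Q A" and eq: "f(q:=a) = g(q:=b)"
  have "a = b" using fun_cong[OF eq, of q] by simp
  moreover have "f = g"
  proof
    fix p show "f p = g p"
      using fun_cong[OF eq, of p] f g assms by (cases "p = q") (auto simp: ext_funs_def)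
  qed
  ultimately show "a = b \<and> f = g" by simp
qed

lemma finite_ext_funs:
  assumes "finite Q" "\<forall>q\<in>Q. finite (A q)"
  shows "finite (ext_funs Q A)"
  using assms
proof (induction Q rule: finite_induct)
  case empty then show ?case by (simp add: ext_funs_empty)
next
  case (insert q Q)
  then show ?case by (simp add: ext_funs_insert)
qed

lemma sum_prod_ext_funs:
  fixes G :: "nat \<Rightarrow> nat \<Rightarrow> 'c::comm_semiring_1"
  assumes "finite Q"
  shows "(\<Sum>f\<in>ext_funs Q A. \<Prod>q\<in>Q. G q (f q)) = (\<Prod>q\<in>Q. \<Sum>a\<in>A q. G q a)"
  using assms
proof (induction Q rule: finite_induct)
  case empty then show ?case by (simp add: ext_funs_empty)
next
  case (insert q Q)
  have "(\<Sum>f\<in>ext_funs (insert q Q) A. \<Prod>p\<in>insert q Q. G p (f p))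
      = (\<Sum>af\<in>A q \<times> ext_funs Q A. \<Prod>p\<in>insert q Q. G p (((\<lambda>(a,f). f(q:=a)) af) p))"
    unfolding ext_funs_insert[OF insert(2)]
    by (subst sum.reindex[OF ext_funs_inj[OF insert(2)]]) (simp add: comp_def)
  also have "\<dots> = (\<Sum>a\<in>A q. \<Sum>f\<in>ext_funs Q A. \<Prod>p\<in>insert q Q. G p ((f(q:=a)) p))"
    by (simp add: sum.cartesian_product case_prod_beta)
  also have "\<dots> = (\<Sum>a\<in>A q. \<Sum>f\<in>ext_funs Q A. G q a * (\<Prod>p\<in>Q. G p (f p)))"
  proof (intro sum.cong refl)
    fix a f
    have "(\<Prod>p\<in>Q. G p ((f(q:=a)) p)) = (\<Prod>p\<in>Q. G p (f p))"
      using insert(2) by (intro prod.cong) auto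
    then show "(\<Prod>p\<in>insert q Q. G p ((f(q:=a)) p)) = G q a * (\<Prod>p\<in>Q. G p (f p))"
      using insert(1,2) by simp
  qed
  also have "\<dots> = (\<Sum>a\<in>A q. G q a) * (\<Prod>p\<in>Q. \<Sum>a\<in>A p. G p a)"
    by (simp add: sum_distrib_left[symmetric] sum_distrib_right insert(3))
  also have "\<dots> = (\<Prod>p\<in>insert q Q. \<Sum>a\<in>A p. G p a)"
    using insert(1,2) by simp
  finally show ?case .
qed

abbreviation bits :: "nat set \<Rightarrow> (nat \<Rightarrow> nat) set" where
  "bits Q \<equiv> ext_funs Q (\<lambda>_. {..<2})"

lemma binary_expansion: "k < 2 ^ m \<Longrightarrow> (\<Sum>j<m. (k div 2 ^ j mod 2) * 2 ^ j) = (k::nat)"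
proof (induction m arbitrary: k)
  case 0 thus ?case by simp
next
  case (Suc m)
  have "(\<Sum>j<Suc m. (k div 2 ^ j mod 2) * 2 ^ j) = k mod 2 + (\<Sum>j<m. (k div 2 ^ (Suc j) mod 2) * 2 ^ (Suc j))"
    by (subst sum.lessThan_Suc_shift) simp
  also have "\<dots> = k mod 2 + (\<Sum>j<m. 2 * (((k div 2) div 2 ^ j mod 2) * 2 ^ j))"
  proof -
    have "\<And>j. k div 2 ^ (Suc j) mod 2 * 2 ^ (Suc j) = 2 * (((k div 2) div 2 ^ j mod 2) * 2 ^ j)"
      by (simp add: div_mult2_eq)
    then show ?thesis by (simp add: mult_ac)
  qed
  also have "\<dots> = k mod 2 + 2 * (\<Sum>j<m. ((k div 2) div 2 ^ j mod 2) * 2 ^ j)"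
    by (simp add: sum_distrib_left)
  also have "\<dots> = k mod 2 + 2 * (k div 2)" using Suc.prems by (simp add: Suc.IH)
  finally show ?case by simp
qed

lemma bij_by_card:
  assumes "inj_on f A" "f ` A \<subseteq> B" "finite B" "card A = card B"
  shows "bij_betw f A B"
proof -
  have "finite (f ` A)" using assms(2,3) finite_subset by blast
  then have "finite A" using finite_imageD assms(1) by blast
  then have "card (f ` A) = card B" using assms(1,4) card_image by metis
  then have "f ` A = B" using assms card_subset_eq by blast
  then show ?thesis using assms(1) by (simp add: bij_betw_def)
qed

definition pos :: "nat set \<Rightarrow> nat \<Rightarrow> nat" where "pos Q q = card {p\<in>Q. p < q}"
definition rpos :: "nat set \<Rightarrow> nat \<Rightarrow> nat" where "rpos Q q = card Q - Suc (pos Q q)"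

lemma pos_less: "finite Q \<Longrightarrow> q \<in> Q \<Longrightarrow> pos Q q < card Q"
  unfolding pos_def by (rule psubset_card_mono) auto

lemma pos_mono: "finite Q \<Longrightarrow> p \<in> Q \<Longrightarrow> p < q \<Longrightarrow> pos Q p < pos Q q"
  unfolding pos_def by (rule psubset_card_mono) auto

lemma pos_inj: "finite Q \<Longrightarrow> inj_on (pos Q) Q"
proof (rule inj_onI)
  fix p q assume Q: "finite Q" and pq: "p \<in> Q" "q \<in> Q" "pos Q p = pos Q q"
  show "p = q"
  proof (rule ccontr)
    assume "p \<noteq> q"
    then have "p < q \<or> q < p" by arith
    then show False using pos_mono[OF Q] pq by fastforce
  qed
qed

lemma rpos_bij: "finite Q \<Longrightarrow> bij_betw (rpos Q) Q {..<card Q}"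
proof (rule bij_by_card)
  assume Q: "finite Q"
  show "inj_on (rpos Q) Q"
  proof (rule inj_onI)
    fix p q assume "p \<in> Q" "q \<in> Q" "rpos Q p = rpos Q q"
    moreover have "pos Q p < card Q" "pos Q q < card Q" using pos_less[OF Q] \<open>p \<in> Q\<close> \<open>q \<in> Q\<close> by auto
    ultimately have "pos Q p = pos Q q" unfolding rpos_def by linarith
    then show "p = q" using pos_inj[OF Q] \<open>p \<in> Q\<close> \<open>q \<in> Q\<close> unfolding inj_on_def by blast
  qed
  show "rpos Q ` Q \<subseteq> {..<card Q}" using pos_less[OF Q] by (auto simp: rpos_def intro!: diff_less) (use pos_less[OF Q] in fastforce)
qed auto

lemma sub_bit_rpos: "q \<in> Q \<Longrightarrow> sub_bit Q k q = k div 2 ^ (rpos Q q) mod 2"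
  by (simp add: sub_bit_def rpos_def pos_def)

lemma sub_bit_out: "q \<notin> Q \<Longrightarrow> sub_bit Q k q = 0"
  by (simp add: sub_bit_def)

lemma sub_bit_inj:
  assumes Q: "finite Q"
  shows "inj_on (sub_bit Q) {..<2 ^ card Q}"
proof (rule inj_onI)
  fix k k' assume k: "k \<in> {..<2 ^ card Q}" "k' \<in> {..<2 ^ card Q}" and eq: "sub_bit Q k = sub_bit Q k'"
  have "\<forall>j<card Q. k div 2 ^ j mod 2 = k' div 2 ^ j mod 2"
  proof (intro allI impI)
    fix j assume "j < card Q"
    then have "j \<in> rpos Q ` Q" using rpos_bij[OF Q] unfolding bij_betw_def by simp
    then obtain q where "q \<in> Q" "rpos Q q = j" by blast
    then show "k div 2 ^ j mod 2 = k' div 2 ^ j mod 2" using fun_cong[OF eq, of q] sub_bit_rpos[of q Q] by simp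
  qed
  then have "(\<Sum>j<card Q. (k div 2 ^ j mod 2) * 2 ^ j) = (\<Sum>j<card Q. (k' div 2 ^ j mod 2) * 2 ^ j)"
    by simp
  moreover have "k = (\<Sum>j<card Q. (k div 2 ^ j mod 2) * 2 ^ j)"
    using binary_expansion[of k "card Q"] k(1) by simp
  moreover have "k' = (\<Sum>j<card Q. (k' div 2 ^ j mod 2) * 2 ^ j)"
    using binary_expansion[of k' "card Q"] k(2) by simp
  ultimately show "k = k'" by simp
qed

lemma card_ext_funs:
  assumes "finite Q"
  shows "card (ext_funs Q A) = (\<Prod>q\<in>Q. card (A q))"
proof -
  have "card (ext_funs Q A) = (\<Sum>f\<in>ext_funs Q A. \<Prod>q\<in>Q. (\<lambda>q a. 1::nat) q (f q))"
    by simp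
  also have "\<dots> = (\<Prod>q\<in>Q. card (A q))"
    by (subst sum_prod_ext_funs[OF assms]) simp
  finally show ?thesis .
qed

lemma card_bits: "finite Q \<Longrightarrow> card (bits Q) = 2 ^ card Q"
proof -
  assume Q: "finite Q"
  have "card (bits Q) = (\<Prod>q\<in>Q. card {..<2::nat})" by (rule card_ext_funs[OF Q])
  also have "\<dots> = 2 ^ card Q" by simp
  finally show ?thesis .
qed

lemma finite_bits: "finite Q \<Longrightarrow> finite (bits Q)"
  by (simp add: finite_ext_funs)

lemma sub_bit_bij:
  assumes Q: "finite Q"
  shows "bij_betw (sub_bit Q) {..<2 ^ card Q} (bits Q)"
proof (rule bij_by_card)
  show "inj_on (sub_bit Q) {..<2 ^ card Q}" by (rule sub_bit_inj[OF Q])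
  show "sub_bit Q ` {..<2 ^ card Q} \<subseteq> bits Q"
    by (auto simp: ext_funs_def sub_bit_def)
  show "finite (bits Q)" by (rule finite_bits[OF Q])
  show "card {..<(2::nat) ^ card Q} = card (bits Q)" by (simp add: card_bits[OF Q])
qed

lemma sum_bits:
  assumes "finite Q"
  shows "(\<Sum>k<2 ^ card Q. F (sub_bit Q k)) = (\<Sum>f\<in>bits Q. F f)"
  using sum.reindex_bij_betw[OF sub_bit_bij[OF assms], of F] .

lemma sum_bits_prod:
  assumes "finite Q"
  shows "(\<Sum>k<2 ^ card Q. \<Prod>q\<in>Q. H q (sub_bit Q k q)) = (\<Prod>q\<in>Q. \<Sum>s<2. (H q s :: 'c::comm_semiring_1))"
proof -
  have "(\<Sum>k<2 ^ card Q. \<Prod>q\<in>Q. H q (sub_bit Q k q)) = (\<Sum>f\<in>bits Q. \<Prod>q\<in>Q. H q (f q))"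
    using sum_bits[OF assms, of "\<lambda>f. \<Prod>q\<in>Q. H q (f q)"] .
  also have "\<dots> = (\<Prod>q\<in>Q. \<Sum>s<2. H q s)" by (rule sum_prod_ext_funs[OF assms])
  finally show ?thesis .
qed

lemma sum_sum_bits_prod:
  assumes "finite Q"
  shows "(\<Sum>a<2 ^ card Q. \<Sum>b<2 ^ card Q. \<Prod>q\<in>Q. H q (sub_bit Q a q) (sub_bit Q b q))
       = (\<Prod>q\<in>Q. \<Sum>s<2. \<Sum>t<2. (H q s t :: 'c::comm_semiring_1))"
proof -
  have "(\<Sum>a<2 ^ card Q. \<Sum>b<2 ^ card Q. \<Prod>q\<in>Q. H q (sub_bit Q a q) (sub_bit Q b q))
      = (\<Sum>a<2 ^ card Q. \<Prod>q\<in>Q. \<Sum>t<2. H q (sub_bit Q a q) t)"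
    by (intro sum.cong refl) (rule sum_bits_prod[OF assms])
  also have "\<dots> = (\<Prod>q\<in>Q. \<Sum>s<2. \<Sum>t<2. H q s t)"
    by (rule sum_bits_prod[OF assms])
  finally show ?thesis .
qed


lemma card_lt_N: "q \<in> {1..n} \<Longrightarrow> card {p \<in> {1..n}. p < q} = q - 1"
proof -
  assume "q \<in> {1..n}"
  then have "{p \<in> {1..n}. p < q} = {1..<q}" by auto
  then show ?thesis by simp
qed

lemma qbit_sub_bit: "q \<in> {1..n} \<Longrightarrow> qbit n q i = sub_bit {1..n} i q"
proof -
  assume q: "q \<in> {1..n}"
  have e: "n - Suc (card {p \<in> {1..n}. p < q}) = n - q" using card_lt_N[OF q] q by simp
  show ?thesis unfolding qbit_def sub_bit_def using q e by simp
qed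

lemma enc_sub_bit:
  assumes "i < 2 ^ n"
  shows "(\<Sum>q\<in>{1..n}. sub_bit {1..n} i q * 2 ^ (n - q)) = i"
proof -
  have "(\<Sum>q\<in>{1..n}. sub_bit {1..n} i q * 2 ^ (n - q)) = (\<Sum>q\<in>{1..n}. (i div 2 ^ (n - q) mod 2) * 2 ^ (n - q))"
  proof (rule sum.cong[OF refl])
    fix q assume "q \<in> {1..n}"
    then show "sub_bit {1..n} i q * 2 ^ (n - q) = (i div 2 ^ (n - q) mod 2) * 2 ^ (n - q)"
      using qbit_sub_bit[of q n i] unfolding qbit_def by simp
  qed
  also have "\<dots> = (\<Sum>j<n. (i div 2 ^ j mod 2) * 2 ^ j)"
  proof (rule sum.reindex_bij_betw)
    show "bij_betw (\<lambda>q. n - q) {1..n} {..<n}"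
    proof (rule bij_by_card)
      show "inj_on (\<lambda>q. n - q) {1..n}" by (rule inj_onI) auto
    qed auto
  qed
  also have "\<dots> = i" using binary_expansion assms by simp
  finally show ?thesis .
qed

lemma bits_N_ex:
  assumes "f \<in> bits {1..n}"
  shows "\<exists>i<2 ^ n. sub_bit {1..n} i = f"
proof -
  have "f \<in> sub_bit {1..n} ` {..<2 ^ card {1..n}}"
    using sub_bit_bij[of "{1..n}"] assms unfolding bij_betw_def by simp
  then show ?thesis by auto
qed

lemma enc_N:
  assumes "f \<in> bits {1..n}"
  shows "(\<Sum>q\<in>{1..n}. f q * 2 ^ (n - q)) < 2 ^ n"
    and "q \<in> {1..n} \<Longrightarrow> qbit n q (\<Sum>q\<in>{1..n}. f q * 2 ^ (n - q)) = f q"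
proof -
  obtain i where i: "i < 2 ^ n" "sub_bit {1..n} i = f" using bits_N_ex[OF assms] by blast
  have e: "(\<Sum>q\<in>{1..n}. f q * 2 ^ (n - q)) = i" using enc_sub_bit[OF i(1)] i(2) by simp
  show "(\<Sum>q\<in>{1..n}. f q * 2 ^ (n - q)) < 2 ^ n" using e i by simp
  show "q \<in> {1..n} \<Longrightarrow> qbit n q (\<Sum>q\<in>{1..n}. f q * 2 ^ (n - q)) = f q"
    using e i qbit_sub_bit by simp
qed

lemma bits_eq_N:
  assumes "k < 2 ^ n" "i < 2 ^ n" "\<forall>q\<in>{1..n}. qbit n q k = qbit n q i"
  shows "k = i"
proof -
  have "sub_bit {1..n} k = sub_bit {1..n} i"
  proof
    fix q show "sub_bit {1..n} k q = sub_bit {1..n} i q"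
    proof (cases "q \<in> {1..n}")
      case True
      then show ?thesis using assms(3) qbit_sub_bit[OF True, of k] qbit_sub_bit[OF True, of i] by metis
    qed (simp add: sub_bit_out)
  qed
  moreover have inj: "inj_on (sub_bit {1..n}) {..<2 ^ n}" using sub_bit_inj[of "{1..n}"] by simp
  ultimately show ?thesis using inj_onD[OF inj] assms(1,2) by blast
qed

definition mf :: "nat \<Rightarrow> nat set \<Rightarrow> nat \<Rightarrow> nat \<Rightarrow> nat \<Rightarrow> nat" where
  "mf n S a k = (\<lambda>q. if q \<in> S then sub_bit S k q else sub_bit ({1..n} - S) a q)"

lemma mf_bits: "S \<subseteq> {1..n} \<Longrightarrow> mf n S a k \<in> bits {1..n}"
  by (auto simp: mf_def ext_funs_def sub_bit_def)

lemma merge_eq: "merge_idx n S a k = (\<Sum>q\<in>{1..n}. mf n S a k q * 2 ^ (n - q))"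
  by (simp add: merge_idx_def mf_def)

lemma merge_lt: "S \<subseteq> {1..n} \<Longrightarrow> merge_idx n S a k < 2 ^ n"
  using enc_N(1)[OF mf_bits] merge_eq by simp

lemma qbit_merge: "S \<subseteq> {1..n} \<Longrightarrow> q \<in> {1..n} \<Longrightarrow> qbit n q (merge_idx n S a k) = mf n S a k q"
  using enc_N(2)[OF mf_bits] merge_eq by simp

lemma merge_empty: "a < 2 ^ n \<Longrightarrow> merge_idx n {} a k = a"
  using enc_sub_bit[of a n] by (simp add: merge_eq mf_def)

lemma lt4: "(a::nat) < 4 \<Longrightarrow> a = 0 \<or> a = 1 \<or> a = 2 \<or> a = 3" by auto

lemma sum2: "(\<Sum>s<2::nat. f s) = f 0 + f 1"
  by (simp add: numeral_2_eq_2)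

lemma sum4: "(\<Sum>s<4::nat. f s) = f 0 + f 1 + f 2 + f 3"
  by (simp add: eval_nat_numeral)

lemma pauli1_tr: "a < 4 \<Longrightarrow> (\<Sum>s<2. pauli1 a $$ (s,s)) = (if a = 0 then 2 else 0)"
  by (drule lt4) (auto simp: sum2 pauli1_def mat_of_rows_list_def)

lemma pauli1_orth: "a < 4 \<Longrightarrow> b < 4 \<Longrightarrow>
  (\<Sum>s<2. \<Sum>t<2. cnj (pauli1 b $$ (s,t)) * pauli1 a $$ (s,t)) = (if a = b then 2 else 0)"
  by (drule lt4, drule lt4) (auto simp: sum2 pauli1_def mat_of_rows_list_def)

lemma less2: "(s::nat) < 2 \<Longrightarrow> s = 0 \<or> s = 1" by auto

lemma pauli1_comp: "s < 2 \<Longrightarrow> t < 2 \<Longrightarrow> s' < 2 \<Longrightarrow> t' < 2 \<Longrightarrow>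
  (\<Sum>a<4. cnj (pauli1 a $$ (s,t)) * pauli1 a $$ (s',t')) = (if s = s' \<and> t = t' then 2 else 0)"
  by (drule less2)+ (auto simp: sum4 pauli1_def mat_of_rows_list_def)


lemma Z4n_eq: "Z4n n = ext_funs {1..n} (\<lambda>_. {..<4})"
  by (auto simp: Z4n_def ext_funs_def)

lemma finite_Z4n: "finite (Z4n n)"
  unfolding Z4n_eq by (rule finite_ext_funs) auto

lemma pauli_index: "i < 2 ^ n \<Longrightarrow> j < 2 ^ n \<Longrightarrow>
  pauli n x $$ (i,j) = (\<Prod>q\<in>{1..n}. pauli1 (x q) $$ (qbit n q i, qbit n q j))"
  by (simp add: pauli_def)

lemma prod_if_zero:
  assumes "finite A"
  shows "(\<Prod>q\<in>A. if P q then (c::'a::{comm_semiring_1,semiring_no_zero_divisors}) else 0) = (if (\<forall>q\<in>A. P q) then c ^ card A else 0)"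
proof (cases "\<forall>q\<in>A. P q")
  case True
  then have "(\<Prod>q\<in>A. if P q then c else 0) = (\<Prod>q\<in>A. c)" by (intro prod.cong) auto
  then show ?thesis using True by simp
next
  case False
  then obtain q where "q \<in> A" "\<not> P q" by blast
  then have "(\<Prod>q\<in>A. if P q then c else 0) = 0" using assms by (intro prod_zero) auto
  then show ?thesis by (simp only: False if_False)
qed

lemma orth_T:
  assumes T: "finite T" and x: "\<forall>q\<in>T. x q < 4" and y: "\<forall>q\<in>T. y q < 4"
  shows "(\<Sum>a<2 ^ card T. \<Sum>b<2 ^ card T. \<Prod>q\<in>T.
            cnj (pauli1 (y q) $$ (sub_bit T a q, sub_bit T b q)) * pauli1 (x q) $$ (sub_bit T a q, sub_bit T b q))
        = (\<Prod>q\<in>T. if x q = y q then 2 else 0)"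
proof -
  have "(\<Sum>a<2 ^ card T. \<Sum>b<2 ^ card T. \<Prod>q\<in>T.
            cnj (pauli1 (y q) $$ (sub_bit T a q, sub_bit T b q)) * pauli1 (x q) $$ (sub_bit T a q, sub_bit T b q))
       = (\<Prod>q\<in>T. \<Sum>s<2. \<Sum>t<2. cnj (pauli1 (y q) $$ (s, t)) * pauli1 (x q) $$ (s, t))"
    by (rule sum_sum_bits_prod[OF T, of "\<lambda>q s t. cnj (pauli1 (y q) $$ (s, t)) * pauli1 (x q) $$ (s, t)"])
  also have "\<dots> = (\<Prod>q\<in>T. if x q = y q then 2 else 0)"
    by (intro prod.cong refl pauli1_orth) (use x y in auto)
  finally show ?thesis .
qed

lemma orth_N:
  assumes x: "x \<in> Z4n n" and y: "y \<in> Z4n n"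
  shows "(\<Sum>i<2 ^ n. \<Sum>j<2 ^ n. cnj (pauli n y $$ (i,j)) * pauli n x $$ (i,j)) = (if x = y then 2 ^ n else 0)"
proof -
  let ?N = "{1..n}"
  have "(\<Sum>i<2 ^ n. \<Sum>j<2 ^ n. cnj (pauli n y $$ (i,j)) * pauli n x $$ (i,j))
     = (\<Sum>a<2 ^ card ?N. \<Sum>b<2 ^ card ?N. \<Prod>q\<in>?N.
            cnj (pauli1 (y q) $$ (sub_bit ?N a q, sub_bit ?N b q)) * pauli1 (x q) $$ (sub_bit ?N a q, sub_bit ?N b q))"
  proof (intro sum.cong, simp, simp)
    fix i j :: nat assume ij: "i \<in> {..<2 ^ card ?N}" "j \<in> {..<2 ^ card ?N}"
    then have ij': "i < 2 ^ n" "j < 2 ^ n" by auto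
    have "cnj (pauli n y $$ (i,j)) * pauli n x $$ (i,j)
        = (\<Prod>q\<in>?N. cnj (pauli1 (y q) $$ (qbit n q i, qbit n q j)) * pauli1 (x q) $$ (qbit n q i, qbit n q j))"
      by (simp add: pauli_index[OF ij'] prod.distrib cnj_prod)
    also have "\<dots> = (\<Prod>q\<in>?N. cnj (pauli1 (y q) $$ (sub_bit ?N i q, sub_bit ?N j q)) * pauli1 (x q) $$ (sub_bit ?N i q, sub_bit ?N j q))"
      by (intro prod.cong refl) (simp only: qbit_sub_bit)
    finally show "cnj (pauli n y $$ (i,j)) * pauli n x $$ (i,j)
        = (\<Prod>q\<in>?N. cnj (pauli1 (y q) $$ (sub_bit ?N i q, sub_bit ?N j q)) * pauli1 (x q) $$ (sub_bit ?N i q, sub_bit ?N j q))" .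
  qed
  also have "\<dots> = (\<Prod>q\<in>?N. if x q = y q then 2 else 0)"
    by (rule orth_T) (use x y in \<open>auto simp: Z4n_def\<close>)
  also have "\<dots> = (if x = y then 2 ^ n else 0)"
  proof -
    have "(\<forall>q\<in>?N. x q = y q) \<longleftrightarrow> x = y"
    proof
      assume h: "\<forall>q\<in>?N. x q = y q"
      show "x = y"
      proof
        fix q show "x q = y q" using h x y by (cases "q \<in> ?N") (auto simp: Z4n_def)
      qed
    qed simp
    then show ?thesis by (simp add: prod_if_zero)
  qed
  finally show ?thesis .
qed

lemma comp_N:
  assumes ij: "i < 2 ^ n" "j < 2 ^ n" "k < 2 ^ n" "l < 2 ^ n"
  shows "(\<Sum>x\<in>Z4n n. cnj (pauli n x $$ (k,l)) * pauli n x $$ (i,j)) = (if k = i \<and> l = j then 2 ^ n else 0)"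
proof -
  let ?N = "{1..n}"
  have "(\<Sum>x\<in>Z4n n. cnj (pauli n x $$ (k,l)) * pauli n x $$ (i,j))
      = (\<Sum>x\<in>ext_funs ?N (\<lambda>_. {..<4}). \<Prod>q\<in>?N.
           (\<lambda>q a. cnj (pauli1 a $$ (qbit n q k, qbit n q l)) * pauli1 a $$ (qbit n q i, qbit n q j)) q (x q))"
    unfolding Z4n_eq by (intro sum.cong refl) (simp add: pauli_index ij prod.distrib cnj_prod)
  also have "\<dots> = (\<Prod>q\<in>?N. \<Sum>a<4. cnj (pauli1 a $$ (qbit n q k, qbit n q l)) * pauli1 a $$ (qbit n q i, qbit n q j))"
    by (rule sum_prod_ext_funs) simp
  also have "\<dots> = (\<Prod>q\<in>?N. if qbit n q k = qbit n q i \<and> qbit n q l = qbit n q j then 2 else 0)"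
    by (intro prod.cong refl pauli1_comp) (simp_all add: qbit_def)
  also have "\<dots> = (if k = i \<and> l = j then 2 ^ n else 0)"
  proof -
    have "(\<forall>q\<in>?N. qbit n q k = qbit n q i \<and> qbit n q l = qbit n q j) \<longleftrightarrow> k = i \<and> l = j"
      using bits_eq_N[of k n i] bits_eq_N[of l n j] ij by auto
    then show ?thesis by (simp add: prod_if_zero)
  qed
  finally show ?thesis .
qed

definition PC :: "nat \<Rightarrow> complex mat \<Rightarrow> (nat \<Rightarrow> nat) \<Rightarrow> complex" where
  "PC n U x = (if x \<in> Z4n n then (\<Sum>i<2 ^ n. \<Sum>j<2 ^ n. cnj (pauli n x $$ (i,j)) * U $$ (i,j)) / 2 ^ n else 0)"

lemma PC_prop:
  assumes ij: "i < 2 ^ n" "j < 2 ^ n"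
  shows "U $$ (i,j) = (\<Sum>x\<in>Z4n n. PC n U x * pauli n x $$ (i,j))"
proof -
  have "(\<Sum>x\<in>Z4n n. PC n U x * pauli n x $$ (i,j))
      = (\<Sum>x\<in>Z4n n. \<Sum>k<2 ^ n. \<Sum>l<2 ^ n. U $$ (k,l) * (cnj (pauli n x $$ (k,l)) * pauli n x $$ (i,j)) / 2 ^ n)"
  proof (rule sum.cong[OF refl])
    fix x assume x: "x \<in> Z4n n"
    have "PC n U x * pauli n x $$ (i,j) = (\<Sum>k<2 ^ n. \<Sum>l<2 ^ n. cnj (pauli n x $$ (k,l)) * U $$ (k,l)) * (pauli n x $$ (i,j) / 2 ^ n)"
      using x by (simp add: PC_def)
    also have "\<dots> = (\<Sum>k<2 ^ n. \<Sum>l<2 ^ n. cnj (pauli n x $$ (k,l)) * U $$ (k,l) * (pauli n x $$ (i,j) / 2 ^ n))"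
      by (simp add: sum_distrib_right sum_divide_distrib)
    also have "\<dots> = (\<Sum>k<2 ^ n. \<Sum>l<2 ^ n. U $$ (k,l) * (cnj (pauli n x $$ (k,l)) * pauli n x $$ (i,j)) / 2 ^ n)"
      by (intro sum.cong refl) (simp add: mult_ac)
    finally show "PC n U x * pauli n x $$ (i,j) = (\<Sum>k<2 ^ n. \<Sum>l<2 ^ n. U $$ (k,l) * (cnj (pauli n x $$ (k,l)) * pauli n x $$ (i,j)) / 2 ^ n)" .
  qed
  also have "\<dots> = (\<Sum>k<2 ^ n. \<Sum>l<2 ^ n. \<Sum>x\<in>Z4n n. U $$ (k,l) * (cnj (pauli n x $$ (k,l)) * pauli n x $$ (i,j)) / 2 ^ n)"
    by (subst sum.swap) (simp add: sum.swap[of _ "Z4n n"])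
  also have "\<dots> = (\<Sum>k<2 ^ n. \<Sum>l<2 ^ n. U $$ (k,l) * (\<Sum>x\<in>Z4n n. cnj (pauli n x $$ (k,l)) * pauli n x $$ (i,j)) / 2 ^ n)"
    by (simp add: sum_distrib_left sum_divide_distrib)
  also have "\<dots> = (\<Sum>k<2 ^ n. \<Sum>l<2 ^ n. if k = i \<and> l = j then U $$ (i,j) else 0)"
    by (intro sum.cong refl) (simp add: comp_N ij)
  also have "\<dots> = (\<Sum>k<2 ^ n. if k = i then U $$ (i,j) else 0)"
  proof (rule sum.cong[OF refl])
    fix k show "(\<Sum>l<2 ^ n. if k = i \<and> l = j then U $$ (i,j) else 0) = (if k = i then U $$ (i,j) else 0)"
      using ij by (cases "k = i") (simp_all add: sum.delta)
  qed
  also have "\<dots> = U $$ (i,j)" using ij by (simp add: sum.delta)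
  finally show ?thesis by simp
qed

lemma PC_unique:
  assumes c0: "\<forall>x. x \<notin> Z4n n \<longrightarrow> c x = 0"
    and cU: "\<forall>i<2 ^ n. \<forall>j<2 ^ n. U $$ (i,j) = (\<Sum>x\<in>Z4n n. c x * pauli n x $$ (i,j))"
  shows "c = PC n U"
proof
  fix y show "c y = PC n U y"
  proof (cases "y \<in> Z4n n")
    case False then show ?thesis using c0 by (simp add: PC_def)
  next
    case True
    have "(\<Sum>i<2 ^ n. \<Sum>j<2 ^ n. cnj (pauli n y $$ (i,j)) * U $$ (i,j))
        = (\<Sum>i<2 ^ n. \<Sum>j<2 ^ n. \<Sum>x\<in>Z4n n. c x * (cnj (pauli n y $$ (i,j)) * pauli n x $$ (i,j)))"
      by (intro sum.cong refl) (simp add: cU sum_distrib_left mult_ac)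
    also have "\<dots> = (\<Sum>x\<in>Z4n n. c x * (\<Sum>i<2 ^ n. \<Sum>j<2 ^ n. cnj (pauli n y $$ (i,j)) * pauli n x $$ (i,j)))"
      by (simp add: sum_distrib_left sum.swap[of _ "Z4n n"])
    also have "\<dots> = (\<Sum>x\<in>Z4n n. if x = y then c y * 2 ^ n else 0)"
      by (intro sum.cong refl) (simp add: orth_N True)
    also have "\<dots> = c y * 2 ^ n" using True finite_Z4n by simp
    finally show ?thesis using True by (simp add: PC_def)
  qed
qed

lemma pauli_coeff_PC: "pauli_coeff n U = PC n U"
  unfolding pauli_coeff_def
proof (rule the_equality)
  show "(\<forall>x. x \<notin> Z4n n \<longrightarrow> PC n U x = 0) \<and>
    (\<forall>i<2 ^ n. \<forall>j<2 ^ n. U $$ (i, j) = (\<Sum>x\<in>Z4n n. PC n U x * pauli n x $$ (i, j)))"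
  proof
    show "\<forall>x. x \<notin> Z4n n \<longrightarrow> PC n U x = 0" by (simp add: PC_def)
    show "\<forall>i<2 ^ n. \<forall>j<2 ^ n. U $$ (i, j) = (\<Sum>x\<in>Z4n n. PC n U x * pauli n x $$ (i, j))"
      by (intro allI impI PC_prop)
  qed
next
  fix c assume h: "(\<forall>x. x \<notin> Z4n n \<longrightarrow> c x = 0) \<and>
    (\<forall>i<2 ^ n. \<forall>j<2 ^ n. U $$ (i, j) = (\<Sum>x\<in>Z4n n. c x * pauli n x $$ (i, j)))"
  show "c = PC n U" by (rule PC_unique) (use h in simp_all)
qed

lemma expansion: "i < 2 ^ n \<Longrightarrow> j < 2 ^ n \<Longrightarrow> U $$ (i,j) = (\<Sum>x\<in>Z4n n. pauli_coeff n U x * pauli n x $$ (i,j))"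
  using PC_prop pauli_coeff_PC by simp


definition PT :: "nat \<Rightarrow> nat set \<Rightarrow> complex mat \<Rightarrow> nat \<Rightarrow> nat \<Rightarrow> complex" where
  "PT n S U a b = (\<Sum>k<2 ^ card S. U $$ (merge_idx n S a k, merge_idx n S b k))"

definition wS :: "nat set \<Rightarrow> (nat \<Rightarrow> nat) \<Rightarrow> complex" where
  "wS S x = (\<Prod>q\<in>S. if x q = 0 then 2 else 0)"

definition DT :: "nat set \<Rightarrow> (nat \<Rightarrow> nat) \<Rightarrow> nat \<Rightarrow> nat \<Rightarrow> complex" where
  "DT T x a b = (\<Prod>q\<in>T. pauli1 (x q) $$ (sub_bit T a q, sub_bit T b q))"

lemma PT_expand:
  assumes S: "S \<subseteq> {1..n}"
  shows "PT n S U a b = (\<Sum>x\<in>Z4n n. pauli_coeff n U x * (wS S x * DT ({1..n} - S) x a b))"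
proof -
  let ?N = "{1..n}" and ?T = "{1..n} - S"
  have finS: "finite S" using S finite_subset by blast
  have "PT n S U a b = (\<Sum>k<2 ^ card S. \<Sum>x\<in>Z4n n. pauli_coeff n U x * pauli n x $$ (merge_idx n S a k, merge_idx n S b k))"
    unfolding PT_def by (intro sum.cong refl) (rule expansion[OF merge_lt[OF S] merge_lt[OF S]])
  also have "\<dots> = (\<Sum>x\<in>Z4n n. pauli_coeff n U x * (\<Sum>k<2 ^ card S. pauli n x $$ (merge_idx n S a k, merge_idx n S b k)))"
    by (simp add: sum.swap[of _ "Z4n n"] sum_distrib_left)
  also have "\<dots> = (\<Sum>x\<in>Z4n n. pauli_coeff n U x * (wS S x * DT ?T x a b))"
  proof (rule sum.cong[OF refl])
    fix x assume x: "x \<in> Z4n n"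
    have pk: "pauli n x $$ (merge_idx n S a k, merge_idx n S b k)
        = (\<Prod>q\<in>S. pauli1 (x q) $$ (sub_bit S k q, sub_bit S k q)) * DT ?T x a b" for k
    proof -
      have "pauli n x $$ (merge_idx n S a k, merge_idx n S b k)
          = (\<Prod>q\<in>?N. pauli1 (x q) $$ (qbit n q (merge_idx n S a k), qbit n q (merge_idx n S b k)))"
        by (rule pauli_index[OF merge_lt[OF S] merge_lt[OF S]])
      also have "\<dots> = (\<Prod>q\<in>?N. pauli1 (x q) $$ (mf n S a k q, mf n S b k q))"
        by (intro prod.cong refl) (simp only: qbit_merge[OF S])
      also have "\<dots> = (\<Prod>q\<in>?T. pauli1 (x q) $$ (mf n S a k q, mf n S b k q)) * (\<Prod>q\<in>S. pauli1 (x q) $$ (mf n S a k q, mf n S b k q))"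
        by (rule prod.subset_diff[OF S]) simp
      also have "(\<Prod>q\<in>?T. pauli1 (x q) $$ (mf n S a k q, mf n S b k q)) = DT ?T x a b"
        unfolding DT_def by (intro prod.cong refl) (simp add: mf_def)
      also have "(\<Prod>q\<in>S. pauli1 (x q) $$ (mf n S a k q, mf n S b k q)) = (\<Prod>q\<in>S. pauli1 (x q) $$ (sub_bit S k q, sub_bit S k q))"
        by (intro prod.cong refl) (simp add: mf_def)
      finally show ?thesis by simp
    qed
    have "(\<Sum>k<2 ^ card S. pauli n x $$ (merge_idx n S a k, merge_idx n S b k))
        = (\<Sum>k<2 ^ card S. \<Prod>q\<in>S. pauli1 (x q) $$ (sub_bit S k q, sub_bit S k q)) * DT ?T x a b"
      by (simp add: pk sum_distrib_right)
    also have "(\<Sum>k<2 ^ card S. \<Prod>q\<in>S. pauli1 (x q) $$ (sub_bit S k q, sub_bit S k q))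
        = (\<Prod>q\<in>S. \<Sum>s<2. pauli1 (x q) $$ (s, s))"
      by (rule sum_bits_prod[OF finS, of "\<lambda>q s. pauli1 (x q) $$ (s, s)"])
    also have "\<dots> = wS S x"
      unfolding wS_def by (intro prod.cong refl pauli1_tr) (use x in \<open>auto simp: Z4n_def\<close>)
    finally show "pauli_coeff n U x * (\<Sum>k<2 ^ card S. pauli n x $$ (merge_idx n S a k, merge_idx n S b k))
        = pauli_coeff n U x * (wS S x * DT ?T x a b)" by simp
  qed
  finally show ?thesis .
qed

lemma trace_form:
  assumes U: "U \<in> carrier_mat (2 ^ n) (2 ^ n)" and S: "S \<subseteq> {1..n}"
  shows "mtrace (ptrace n S (adj U) * ptrace n S U)
       = (\<Sum>a<2 ^ card ({1..n} - S). \<Sum>b<2 ^ card ({1..n} - S). cnj (PT n S U a b) * PT n S U a b)"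
proof -
  let ?m = "2 ^ card ({1..n} - S)"
  have dA: "dim_row (ptrace n S (adj U)) = ?m" "dim_col (ptrace n S (adj U)) = ?m"
    and dB: "dim_row (ptrace n S U) = ?m" "dim_col (ptrace n S U) = ?m"
    by (simp_all add: ptrace_def)
  have A: "ptrace n S (adj U) $$ (a,b) = cnj (PT n S U b a)" if "a < ?m" "b < ?m" for a b
  proof -
    have "ptrace n S (adj U) $$ (a,b) = (\<Sum>k<2 ^ card S. adj U $$ (merge_idx n S a k, merge_idx n S b k))"
      using that by (simp add: ptrace_def)
    also have "\<dots> = (\<Sum>k<2 ^ card S. cnj (U $$ (merge_idx n S b k, merge_idx n S a k)))"
      using U merge_lt[OF S] by (intro sum.cong refl) (simp add: adj_def)
    finally show ?thesis by (simp add: PT_def)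
  qed
  have B: "ptrace n S U $$ (a,b) = PT n S U a b" if "a < ?m" "b < ?m" for a b
    using that by (simp add: ptrace_def PT_def)
  have "mtrace (ptrace n S (adj U) * ptrace n S U) = (\<Sum>a<?m. \<Sum>b<?m. cnj (PT n S U b a) * PT n S U b a)"
    unfolding mtrace_def
  proof (rule sum.cong)
    show "{..<dim_row (ptrace n S (adj U) * ptrace n S U)} = {..<?m}" using dA by simp
  next
    fix a :: nat assume "a \<in> {..<?m}"
    then have a: "a < ?m" by simp
    then show "(ptrace n S (adj U) * ptrace n S U) $$ (a, a) = (\<Sum>b<?m. cnj (PT n S U b a) * PT n S U b a)"
      using dA dB by (simp add: scalar_prod_def A B lessThan_atLeast0)
  qed
  also have "\<dots> = (\<Sum>a<?m. \<Sum>b<?m. cnj (PT n S U a b) * PT n S U a b)"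
    by (rule sum.swap)
  finally show ?thesis .
qed
lemma wS_val: "finite S \<Longrightarrow> wS S x = (if \<forall>q\<in>S. x q = 0 then 2 ^ card S else 0)"
  unfolding wS_def by (rule prod_if_zero)

lemma sum_swap4:
  "(\<Sum>a\<in>A. \<Sum>b\<in>B. \<Sum>y\<in>Y. \<Sum>x\<in>X. F a b y x) = (\<Sum>y\<in>Y. \<Sum>x\<in>X. \<Sum>a\<in>A. \<Sum>b\<in>B. F a b y x)"
proof -
  have "(\<Sum>a\<in>A. \<Sum>b\<in>B. \<Sum>y\<in>Y. \<Sum>x\<in>X. F a b y x) = (\<Sum>a\<in>A. \<Sum>y\<in>Y. \<Sum>b\<in>B. \<Sum>x\<in>X. F a b y x)"
    by (rule sum.cong[OF refl], rule sum.swap)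
  also have "\<dots> = (\<Sum>a\<in>A. \<Sum>y\<in>Y. \<Sum>x\<in>X. \<Sum>b\<in>B. F a b y x)"
    by (rule sum.cong[OF refl], rule sum.cong[OF refl], rule sum.swap)
  also have "\<dots> = (\<Sum>y\<in>Y. \<Sum>a\<in>A. \<Sum>x\<in>X. \<Sum>b\<in>B. F a b y x)"
    by (rule sum.swap)
  also have "\<dots> = (\<Sum>y\<in>Y. \<Sum>x\<in>X. \<Sum>a\<in>A. \<Sum>b\<in>B. F a b y x)"
    by (rule sum.cong[OF refl], rule sum.swap)
  finally show ?thesis .
qed

lemma main_sum:
  assumes S: "S \<subseteq> {1..n}"
  shows "(\<Sum>a<2 ^ card ({1..n} - S). \<Sum>b<2 ^ card ({1..n} - S). cnj (PT n S U a b) * PT n S U a b)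
     = 2 ^ (n + card S) * (\<Sum>x\<in>{x\<in>Z4n n. supp n x \<inter> S = {}}. complex_of_real ((cmod (pauli_coeff n U x))\<^sup>2))"
proof -
  let ?T = "{1..n} - S" and ?c = "pauli_coeff n U" and ?Z = "Z4n n"
  define K where "K y x = cnj (?c y * wS S y) * (?c x * wS S x)" for y x
  have finS: "finite S" using S finite_subset by blast
  have finT: "finite ?T" by simp
  have nsq: "(complex_of_real (cmod z))\<^sup>2 = z * cnj z" for z
    using complex_norm_square[of z] by (simp only: of_real_power)
  have cnjw: "cnj (wS S x) = wS S x" for x by (simp add: wS_val[OF finS])
  have step1: "cnj (PT n S U a b) * PT n S U a b
      = (\<Sum>y\<in>?Z. \<Sum>x\<in>?Z. K y x * (cnj (DT ?T y a b) * DT ?T x a b))" for a b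
  proof -
    have "cnj (PT n S U a b) * PT n S U a b
       = (\<Sum>y\<in>?Z. cnj (?c y * (wS S y * DT ?T y a b))) * (\<Sum>x\<in>?Z. ?c x * (wS S x * DT ?T x a b))"
      by (simp only: PT_expand[OF S] cnj_sum)
    also have "\<dots> = (\<Sum>y\<in>?Z. \<Sum>x\<in>?Z. cnj (?c y * (wS S y * DT ?T y a b)) * (?c x * (wS S x * DT ?T x a b)))"
      by (rule sum_product)
    also have "\<dots> = (\<Sum>y\<in>?Z. \<Sum>x\<in>?Z. K y x * (cnj (DT ?T y a b) * DT ?T x a b))"
      by (intro sum.cong refl) (simp add: K_def mult_ac)
    finally show ?thesis .
  qed
  have orth: "(\<Sum>a<2 ^ card ?T. \<Sum>b<2 ^ card ?T. cnj (DT ?T y a b) * DT ?T x a b) = (\<Prod>q\<in>?T. if x q = y q then 2 else 0)"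
    if "x \<in> ?Z" "y \<in> ?Z" for x y
  proof -
    have "(\<Sum>a<2 ^ card ?T. \<Sum>b<2 ^ card ?T. cnj (DT ?T y a b) * DT ?T x a b)
       = (\<Sum>a<2 ^ card ?T. \<Sum>b<2 ^ card ?T. \<Prod>q\<in>?T.
            cnj (pauli1 (y q) $$ (sub_bit ?T a q, sub_bit ?T b q)) * pauli1 (x q) $$ (sub_bit ?T a q, sub_bit ?T b q))"
      by (simp add: DT_def prod.distrib)
    also have "\<dots> = (\<Prod>q\<in>?T. if x q = y q then 2 else 0)"
      by (rule orth_T[OF finT]) (use that in \<open>auto simp: Z4n_def\<close>)
    finally show ?thesis .
  qed
  have trm: "K y x * (\<Prod>q\<in>?T. if x q = y q then 2 else 0)
      = (if x = y then complex_of_real ((cmod (?c y))\<^sup>2) * (wS S y * wS S y) * 2 ^ card ?T else 0)"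
    if x: "x \<in> ?Z" and y: "y \<in> ?Z" for x y
  proof (cases "x = y")
    case True
    have "(\<Prod>q\<in>?T. if x q = y q then (2::complex) else 0) = 2 ^ card ?T" using True by simp
    then show ?thesis using True by (simp add: K_def cnjw nsq mult_ac)
  next
    case False
    show ?thesis
    proof (cases "(\<forall>q\<in>S. x q = 0) \<and> (\<forall>q\<in>S. y q = 0)")
      case True
      from False obtain q where q: "x q \<noteq> y q" by blast
      have "q \<in> {1..n}"
      proof (rule ccontr)
        assume nq: "q \<notin> {1..n}"
        have "x q = 0" using x nq unfolding Z4n_def by blast
        moreover have "y q = 0" using y nq unfolding Z4n_def by blast
        ultimately show False using q by simp
      qed
      moreover have "q \<notin> S" using q True by auto
      ultimately have "q \<in> ?T" by simp
      then have "(\<Prod>q\<in>?T. if x q = y q then (2::complex) else 0) = 0"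
        using q finT by (intro prod_zero) auto
      then show ?thesis using False by simp
    next
      case False2: False
      then have "wS S x = 0 \<or> wS S y = 0" by (auto simp: wS_val[OF finS])
      then have "K y x = 0" by (auto simp: K_def)
      then show ?thesis using False by simp
    qed
  qed
  have pw: "(2::complex) ^ card S * 2 ^ card S * 2 ^ card ?T = 2 ^ (n + card S)"
  proof -
    have "card S \<le> n" using card_mono[OF _ S] by simp
    moreover have "card ?T = n - card S" using card_Diff_subset[OF finS S] by simp
    ultimately have e: "card S + card S + card ?T = n + card S" by simp
    show ?thesis by (simp only: power_add[symmetric] e)
  qed
  have "(\<Sum>a<2 ^ card ?T. \<Sum>b<2 ^ card ?T. cnj (PT n S U a b) * PT n S U a b)
      = (\<Sum>a<2 ^ card ?T. \<Sum>b<2 ^ card ?T. \<Sum>y\<in>?Z. \<Sum>x\<in>?Z. K y x * (cnj (DT ?T y a b) * DT ?T x a b))"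
    by (simp only: step1)
  also have "\<dots> = (\<Sum>y\<in>?Z. \<Sum>x\<in>?Z. \<Sum>a<2 ^ card ?T. \<Sum>b<2 ^ card ?T. K y x * (cnj (DT ?T y a b) * DT ?T x a b))"
    by (rule sum_swap4)
  also have "\<dots> = (\<Sum>y\<in>?Z. \<Sum>x\<in>?Z. K y x * (\<Sum>a<2 ^ card ?T. \<Sum>b<2 ^ card ?T. cnj (DT ?T y a b) * DT ?T x a b))"
    by (simp only: sum_distrib_left)
  also have "\<dots> = (\<Sum>y\<in>?Z. \<Sum>x\<in>?Z. if x = y then complex_of_real ((cmod (?c y))\<^sup>2) * (wS S y * wS S y) * 2 ^ card ?T else 0)"
  proof (rule sum.cong[OF refl], rule sum.cong[OF refl])
    fix y x assume y: "y \<in> ?Z" and x: "x \<in> ?Z"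
    show "K y x * (\<Sum>a<2 ^ card ?T. \<Sum>b<2 ^ card ?T. cnj (DT ?T y a b) * DT ?T x a b)
       = (if x = y then complex_of_real ((cmod (?c y))\<^sup>2) * (wS S y * wS S y) * 2 ^ card ?T else 0)"
      by (simp only: orth[OF x y] trm[OF x y])
  qed
  also have "\<dots> = (\<Sum>y\<in>?Z. complex_of_real ((cmod (?c y))\<^sup>2) * (wS S y * wS S y) * 2 ^ card ?T)"
    by (intro sum.cong refl) (simp add: finite_Z4n)
  also have "\<dots> = (\<Sum>y\<in>?Z. if supp n y \<inter> S = {} then 2 ^ (n + card S) * complex_of_real ((cmod (?c y))\<^sup>2) else 0)"
  proof (intro sum.cong refl)
    fix y assume "y \<in> ?Z"
    have "supp n y \<inter> S = {} \<longleftrightarrow> (\<forall>q\<in>S. y q = 0)" unfolding supp_def using S by (auto simp del: atLeastAtMost_iff)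
    then show "complex_of_real ((cmod (?c y))\<^sup>2) * (wS S y * wS S y) * 2 ^ card ?T
        = (if supp n y \<inter> S = {} then 2 ^ (n + card S) * complex_of_real ((cmod (?c y))\<^sup>2) else 0)"
      using pw by (simp add: wS_val[OF finS] mult_ac)
  qed
  also have "\<dots> = 2 ^ (n + card S) * (\<Sum>x\<in>{x\<in>?Z. supp n x \<inter> S = {}}. complex_of_real ((cmod (?c x))\<^sup>2))"
    unfolding sum.inter_filter[OF finite_Z4n] sum_distrib_left by (intro sum.cong refl) simp
  finally show ?thesis .
qed


lemma parseval:
  assumes "unitary_mat (2 ^ n) U"
  shows "(\<Sum>x\<in>Z4n n. complex_of_real ((cmod (pauli_coeff n U x))\<^sup>2)) = 1"
proof -
  have U: "U \<in> carrier_mat (2 ^ n) (2 ^ n)" and AU: "adj U * U = 1\<^sub>m (2 ^ n)"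
    using assms by (auto simp: unitary_mat_def)
  have PT0: "PT n {} U a b = U $$ (a,b)" if "a < 2 ^ n" "b < 2 ^ n" for a b
    using that by (simp add: PT_def merge_empty)
  have m: "(\<Sum>a<2 ^ card ({1..n} - {}). \<Sum>b<2 ^ card ({1..n} - {}). cnj (PT n {} U a b) * PT n {} U a b)
     = 2 ^ (n + card {}) * (\<Sum>x\<in>{x\<in>Z4n n. supp n x \<inter> {} = {}}. complex_of_real ((cmod (pauli_coeff n U x))\<^sup>2))"
    using main_sum[of "{}" n U] by simp
  have "(\<Sum>a<2 ^ card ({1..n} - {}). \<Sum>b<2 ^ card ({1..n} - {}). cnj (PT n {} U a b) * PT n {} U a b)
      = (\<Sum>a<2 ^ n. \<Sum>b<2 ^ n. cnj (U $$ (a,b)) * U $$ (a,b))"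
    by (simp add: PT0)
  also have "\<dots> = (\<Sum>b<2 ^ n. \<Sum>a<2 ^ n. cnj (U $$ (a,b)) * U $$ (a,b))"
    by (rule sum.swap)
  also have "\<dots> = (\<Sum>b<2 ^ n. (adj U * U) $$ (b,b))"
  proof (rule sum.cong[OF refl])
    fix b assume "b \<in> {..<(2::nat) ^ n}"
    then have b: "b < 2 ^ n" by simp
    have "(adj U * U) $$ (b,b) = (\<Sum>a\<in>{0..<2 ^ n}. adj U $$ (b,a) * U $$ (a,b))"
      using U b by (simp add: adj_def scalar_prod_def)
    also have "\<dots> = (\<Sum>a<2 ^ n. cnj (U $$ (a,b)) * U $$ (a,b))"
      using U b by (simp add: adj_def lessThan_atLeast0)
    finally show "(\<Sum>a<2 ^ n. cnj (U $$ (a,b)) * U $$ (a,b)) = (adj U * U) $$ (b,b)" by simp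
  qed
  also have "\<dots> = 2 ^ n" by (simp add: AU)
  finally have "2 ^ n = 2 ^ n * (\<Sum>x\<in>Z4n n. complex_of_real ((cmod (pauli_coeff n U x))\<^sup>2))"
    using m by simp
  then show ?thesis by simp
qed

lemma general_S:
  assumes Uu: "unitary_mat (2 ^ n) U" and S: "S \<subseteq> {1..n}"
  shows "complex_of_real (influence n S U) =
            1 - 1 / 2 ^ (n + card S) * mtrace (ptrace n S (adj U) * ptrace n S U)"
proof -
  have U: "U \<in> carrier_mat (2 ^ n) (2 ^ n)" using Uu by (simp add: unitary_mat_def)
  let ?g = "\<lambda>x. complex_of_real ((cmod (pauli_coeff n U x))\<^sup>2)"
  let ?F = "\<Sum>x\<in>{x\<in>Z4n n. supp n x \<inter> S = {}}. ?g x"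
  let ?G = "\<Sum>x\<in>{x\<in>Z4n n. supp n x \<inter> S \<noteq> {}}. ?g x"
  have tr: "mtrace (ptrace n S (adj U) * ptrace n S U) = 2 ^ (n + card S) * ?F"
    using trace_form[OF U S] main_sum[OF S] by simp
  have inf: "complex_of_real (influence n S U) = ?G"
    by (simp add: influence_def)
  have "(\<Sum>x\<in>Z4n n. ?g x) = (\<Sum>x\<in>Z4n n. (if supp n x \<inter> S = {} then ?g x else 0) + (if supp n x \<inter> S \<noteq> {} then ?g x else 0))"
    by (intro sum.cong refl) simp
  also have "\<dots> = ?F + ?G"
    by (simp only: sum.distrib sum.inter_filter[OF finite_Z4n])
  finally have "?F + ?G = 1" using parseval[OF Uu] by simp
  then show ?thesis using tr inf by (simp add: algebra_simps)
qed

theorem mainTheorem12: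
  fixes n :: nat and U :: "complex mat"
  assumes "unitary_mat (2 ^ n) U"
  shows "(\<forall>j\<in>{1..n}. complex_of_real (influence n {j} U) =
            1 - 1 / 2 ^ (n + 1) * mtrace (ptrace n {j} (adj U) * ptrace n {j} U))
       \<and> (\<forall>S. S \<subseteq> {1..n} \<longrightarrow> complex_of_real (influence n S U) =
            1 - 1 / 2 ^ (n + card S) * mtrace (ptrace n S (adj U) * ptrace n S U))"
proof
  show "\<forall>j\<in>{1..n}. complex_of_real (influence n {j} U) =
            1 - 1 / 2 ^ (n + 1) * mtrace (ptrace n {j} (adj U) * ptrace n {j} U)"
  proof
    fix j assume "j \<in> {1..n}"
    then have "{j} \<subseteq> {1..n}" by simp
    from general_S[OF assms this] show "complex_of_real (influence n {j} U) =
            1 - 1 / 2 ^ (n + 1) * mtrace (ptrace n {j} (adj U) * ptrace n {j} U)" by simp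
  qed
  show "\<forall>S. S \<subseteq> {1..n} \<longrightarrow> complex_of_real (influence n S U) =
            1 - 1 / 2 ^ (n + card S) * mtrace (ptrace n S (adj U) * ptrace n S U)"
    using general_S[OF assms] by blast
qed

end
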